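(* Let $h_1,h_2,\dots$ be real-valued i.i.d. random variables, and for $N\in\mathbb N$ set $\delta_N=\mathbb E(h_1\mathbf 1_{\{|h_1|\le N\}})$ and $\sigma_N=\frac1N\mathbb E(h_1^2\mathbf 1_{\{|h_1|\le N\}})$. For every $\eta>0$ there exists $N_\eta\in\mathbb N$ such that $\delta_N^2\le\eta N(1+\sigma_N)$ for all $N\ge N_\eta$. *)

theory Defs
  imports "HOL-Probability.Probability"
begin

end

theory Submission
  imports Defs
begin

theorem lemma7p1:
  fixes M :: "'a measure" and h :: "nat \<Rightarrow> 'a \<Rightarrow> real" and \<eta> :: real
  assumes "prob_space M"
    and "\<And>i. i \<ge> 1 \<Longrightarrow> h i \<in> borel_measurable M"
    and "prob_space.indep_vars M (\<lambda>_. borel) h {1..}"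
    and "\<And>i. i \<ge> 1 \<Longrightarrow> distr M borel (h i) = distr M borel (h 1)"
    and "\<eta> > 0"
  shows "\<exists>N\<^sub>\<eta>::nat. \<forall>N::nat. N \<ge> N\<^sub>\<eta> \<longrightarrow>
     (let \<delta> = prob_space.expectation M (\<lambda>x. h 1 x * indicator {y. \<bar>h 1 y\<bar> \<le> real N} x);
          \<sigma> = prob_space.expectation M (\<lambda>x. (h 1 x)\<^sup>2 * indicator {y. \<bar>h 1 y\<bar> \<le> real N} x) / real N
      in \<delta>\<^sup>2 \<le> \<eta> * real N * (1 + \<sigma>))"
proof -
  interpret prob_space M by (rule assms(1))
  define X where "X = h 1"
  have Xm[measurable]: "X \<in> borel_measurable M" using assms(2)[of 1] by (simp add: X_def)
  define e where "e = sqrt (\<eta> / 2)"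
  have e0: "e > 0" using assms(5) by (simp add: e_def)
  have e2: "e\<^sup>2 = \<eta> / 2" using assms(5) by (simp add: e_def)
  define B where "B K = {x\<in>space M. real K < \<bar>X x\<bar>}" for K :: nat
  have Bs: "range B \<subseteq> sets M" unfolding B_def by (auto intro!: pred_Collect_borel Xm)
  have Bdec: "decseq B" unfolding decseq_def B_def by auto
  have Bint: "(\<Inter>i. B i) = {}"
  proof (rule ccontr)
    assume "(\<Inter>i. B i) \<noteq> {}"
    then obtain x where "\<And>i. x \<in> B i" by blast
    moreover obtain n :: nat where "\<bar>X x\<bar> < real n" using reals_Archimedean2 by blast
    ultimately show False unfolding B_def by (metis (mono_tags, lifting) mem_Collect_eq not_less_iff_gr_or_eq order_less_trans)
  qed
  have lim: "(\<lambda>n. measure M (B n)) \<longlonglongrightarrow> 0"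
    using finite_Lim_measure_decseq[OF Bs Bdec] Bint by simp
  have "0 < e\<^sup>2" using e0 by simp
  from order_tendstoD(2)[OF lim this]
  have "eventually (\<lambda>n. measure M (B n) < e\<^sup>2) sequentially" .
  then obtain K0 where K0: "measure M (B K0) < e\<^sup>2" unfolding eventually_sequentially by blast
  define K where "K = real K0"
  define p where "p = measure M (B K0)"
  define C where "C = K + e / 2"
  define N0 where "N0 = nat \<lceil>2 * C\<^sup>2 / \<eta>\<rceil> + 1"
  show ?thesis
  proof (intro exI allI impI)
    fix N :: nat
    assume N: "N0 \<le> N"
    have N1: "real N \<ge> 1" using N unfolding N0_def by simp
    have "2 * C\<^sup>2 / \<eta> \<le> real N" using N unfolding N0_def by linarith
    then have NC: "2 * C\<^sup>2 \<le> \<eta> * real N" using assms(5) by (simp add: field_simps)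
    define A where "A = {y. \<bar>X y\<bar> \<le> real N}"
    have ind: "\<And>x. indicator A x = (if \<bar>X x\<bar> \<le> real N then 1 else 0 :: real)"
      by (simp add: A_def indicator_def)
    define \<delta> where "\<delta> = expectation (\<lambda>x. X x * indicator A x)"
    define s where "s = expectation (\<lambda>x. (X x)\<^sup>2 * indicator A x)"
    have m1: "(\<lambda>x. X x * indicator A x) \<in> borel_measurable M" unfolding ind by measurable
    have m2: "(\<lambda>x. (X x)\<^sup>2 * indicator A x) \<in> borel_measurable M" unfolding ind by measurable
    have i2: "integrable M (\<lambda>x. (X x)\<^sup>2 * indicator A x)"
    proof (rule integrable_const_bound[where B="(real N)\<^sup>2"])
      show "AE x in M. norm ((X x)\<^sup>2 * indicator A x) \<le> (real N)\<^sup>2"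
      proof (rule AE_I2)
        fix x
        show "norm ((X x)\<^sup>2 * indicator A x) \<le> (real N)\<^sup>2"
        proof (cases "\<bar>X x\<bar> \<le> real N")
          case True
          then have "(X x)\<^sup>2 \<le> (real N)\<^sup>2"
            by (metis abs_ge_zero abs_of_nat power2_abs power_mono)
          then show ?thesis using True by (simp add: ind)
        qed (simp add: ind)
      qed
    qed (rule m2)
    have i1: "integrable M (\<lambda>x. X x * indicator A x)"
    proof (rule integrable_const_bound[where B="real N"])
      show "AE x in M. norm (X x * indicator A x) \<le> real N"
        by (rule AE_I2) (simp add: ind abs_mult)
    qed (rule m1)
    have iB: "integrable M (indicator (B K0) :: 'a \<Rightarrow> real)"
      using Bs by (intro integrable_real_indicator) (auto simp: less_top[symmetric])
    have s0: "s \<ge> 0" unfolding s_def by (intro integral_nonneg_AE) auto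
    define r where "r = sqrt s"
    have r0: "r \<ge> 0" and rs: "r\<^sup>2 = s" using s0 by (auto simp: r_def)
    define a where "a = (r + 1) / (2 * e)"
    have a0: "a > 0" using r0 e0 by (simp add: a_def)
    have pw: "\<bar>X x * indicator A x\<bar> \<le> K + a * indicator (B K0) x + (X x)\<^sup>2 * indicator A x / (4 * a)"
      if x: "x \<in> space M" for x
    proof -
      have K0': "K \<ge> 0" by (simp add: K_def)
      have amgm: "\<bar>X x\<bar> \<le> a + (X x)\<^sup>2 / (4 * a)"
      proof -
        have "0 \<le> (\<bar>X x\<bar> - 2 * a)\<^sup>2" by simp
        then have "4 * a * \<bar>X x\<bar> \<le> 4 * a * a + (X x)\<^sup>2"
          by (simp add: power2_eq_square algebra_simps)
        then show ?thesis using a0 by (simp add: field_simps power2_eq_square)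
      qed
      show ?thesis
      proof (cases "\<bar>X x\<bar> \<le> K")
        case True
        have "0 \<le> a * indicator (B K0) x + (X x)\<^sup>2 * indicator A x / (4 * a)"
          using a0 by (simp add: indicator_def)
        moreover have "\<bar>X x * indicator A x\<bar> \<le> K" using True K0' by (simp add: ind abs_mult)
        ultimately show ?thesis by linarith
      next
        case False
        then have xB: "x \<in> B K0" using x by (simp add: B_def K_def)
        show ?thesis
        proof (cases "x \<in> A")
          case True
          then show ?thesis using xB amgm K0' by (simp add: abs_mult)
        next
          case False
          then show ?thesis using xB K0' a0 by simp
        qed
      qed
    qed
    have "\<bar>\<delta>\<bar> \<le> expectation (\<lambda>x. \<bar>X x * indicator A x\<bar>)"
      unfolding \<delta>_def by (rule integral_abs_bound)
    also have "\<dots> \<le> expectation (\<lambda>x. K + a * indicator (B K0) x + (X x)\<^sup>2 * indicator A x / (4 * a))"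
      using pw i2 iB i1 by (intro integral_mono integrable_abs) auto
    also have "\<dots> = K + a * p + s / (4 * a)"
      using i2 iB by (simp add: p_def s_def prob_space Int_absorb2 B_def)
    finally have dle: "\<bar>\<delta>\<bar> \<le> K + a * p + s / (4 * a)" .
    have p0: "p \<le> e\<^sup>2" using K0 by (simp add: p_def)
    have "a * p \<le> a * e\<^sup>2" using a0 p0 by simp
    also have "\<dots> = (r + 1) * e / 2" using e0 by (simp add: a_def power2_eq_square)
    finally have t1: "a * p \<le> (r + 1) * e / 2" .
    have "s / (4 * a) = r\<^sup>2 * e / (2 * (r + 1))" using e0 r0 by (simp add: a_def rs field_simps)
    also have "\<dots> \<le> r * e / 2"
    proof -
      have "r\<^sup>2 * e \<le> r * e * (r + 1)" using r0 e0 by (simp add: power2_eq_square algebra_simps)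
      then show ?thesis using r0 by (simp add: field_simps)
    qed
    finally have t2: "s / (4 * a) \<le> r * e / 2" .
    have dC: "\<bar>\<delta>\<bar> \<le> C + e * r" using dle t1 t2 unfolding C_def by (simp add: algebra_simps)
    have C0: "C \<ge> 0" using e0 by (simp add: C_def K_def)
    have "\<delta>\<^sup>2 \<le> (C + e * r)\<^sup>2"
      using dC by (metis abs_ge_zero power2_abs power_mono)
    also have "\<dots> \<le> 2 * C\<^sup>2 + 2 * e\<^sup>2 * r\<^sup>2"
    proof -
      have "0 \<le> (C - e * r)\<^sup>2" by simp
      then show ?thesis by (simp add: power2_eq_square algebra_simps)
    qed
    also have "\<dots> = 2 * C\<^sup>2 + \<eta> * s" using e2 rs by simp
    also have "\<dots> \<le> \<eta> * real N * (1 + s / real N)"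
      using NC N1 by (simp add: field_simps)
    finally show "let \<delta> = expectation (\<lambda>x. h 1 x * indicator {y. \<bar>h 1 y\<bar> \<le> real N} x);
          \<sigma> = expectation (\<lambda>x. (h 1 x)\<^sup>2 * indicator {y. \<bar>h 1 y\<bar> \<le> real N} x) / real N
      in \<delta>\<^sup>2 \<le> \<eta> * real N * (1 + \<sigma>)"
      by (simp add: \<delta>_def s_def A_def X_def Let_def)
  qed
qed

end
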